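(* Let $\emptyset\neq A\subseteq L^0(E)$ and $1\le s\le p<\infty$. Then: (1) if $\operatorname{chcd}_pA\neq\emptyset$, then $\operatorname{chcd}_0\operatorname{chcd}_pA=\operatorname{chcd}_0A$; (2) $\operatorname{chcd}_p\operatorname{chcd}_0A=\operatorname{chcd}_pA$; (3) $\operatorname{chcd}_p\operatorname{chcd}_pA=\operatorname{chcd}_pA$; (4) $\operatorname{chcd}_p\operatorname{chcd}_sA=\operatorname{chcd}_pA$; (5) if $\operatorname{chcd}_pA\neq\emptyset$, then $\operatorname{chcd}_s\operatorname{chcd}_pA=\operatorname{chcd}_sA$.
   Context: $E$ is a separable Banach space; $(\Omega,\mathcal F,\mathbb P)$ a complete probability space; $L^0(E)$ the a.s.-classes of $E$-valued random variables, $L^q(E)=\{\xi:\mathbb E|\xi|^q<\infty\}$. $\operatorname{chcd}_0$ is the $0$-Choquet convex decomposable hull operator on subsets of $L^0(E)$: for nonempty $B\subseteq L^0(E)$, $\operatorname{chcd}_0B=\operatorname{cl}_0\operatorname{dec}\operatorname{conv}B$, the closure in probability of the set of finite decompositions $\sum_{i=1}^m1_{C_i}\xi_i$ ($(C_i)$ a measurable partition of $\Omega$) of elements $\xi_i$ of the convex hull of $B$, and $\operatorname{chcd}_0\emptyset=\emptyset$; it is extensive, monotone and idempotent. For $q\in[1,\infty)$ and any $B\subseteq L^0(E)$, the (extended) $q$-Choquet convex decomposable hull is $\operatorname{chcd}_qB:=\operatorname{chcd}_0B\cap L^q(E)$ (for $B\subseteq L^q(E)$ this agrees with $\operatorname{cl}_q\operatorname{dec}\operatorname{conv}B$,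 closure in $L^q$-norm). *)

theory Defs
  imports "HOL-Probability.Probability"
begin

text \<open>Random variables are represented by (Borel) measurable functions; L^0(E) is the set
  of measurable functions, and all sets below are saturated under a.e. equality
  (closures in probability), so working with representatives is harmless.\<close>

definition L0 :: "'a measure \<Rightarrow> ('a \<Rightarrow> 'b::{banach,second_countable_topology}) set" where
  "L0 M = borel_measurable M"

definition Lq :: "'a measure \<Rightarrow> real \<Rightarrow> ('a \<Rightarrow> 'b::{banach,second_countable_topology}) set" where
  "Lq M q = {f \<in> borel_measurable M. integrable M (\<lambda>x. norm (f x) powr q)}"

definition conv_rv :: "('a \<Rightarrow> 'b::real_vector) set \<Rightarrow> ('a \<Rightarrow> 'b) set" where
  "conv_rv B = {f. \<exists>(n::nat) c g. n \<ge> 1 \<and> (\<forall>i<n. c i \<ge> (0::real) \<and> g i \<in> B)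
      \<and> (\<Sum>i<n. c i) = 1 \<and> f = (\<lambda>x. \<Sum>i<n. c i *\<^sub>R g i x)}"

definition dec :: "'a measure \<Rightarrow> ('a \<Rightarrow> 'b::real_vector) set \<Rightarrow> ('a \<Rightarrow> 'b) set" where
  "dec M B = {f. \<exists>(m::nat) C \<xi>. m \<ge> 1 \<and> (\<forall>i<m. C i \<in> sets M \<and> \<xi> i \<in> B)
      \<and> disjoint_family_on C {..<m} \<and> (\<Union>i<m. C i) = space M
      \<and> f = (\<lambda>x. \<Sum>i<m. indicator (C i) x *\<^sub>R \<xi> i x)}"

definition conv_in_prob :: "'a measure \<Rightarrow> (nat \<Rightarrow> 'a \<Rightarrow> 'b::metric_space) \<Rightarrow> ('a \<Rightarrow> 'b) \<Rightarrow> bool" where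
  "conv_in_prob M g f \<longleftrightarrow>
     (\<forall>e>0. (\<lambda>n. measure M {x \<in> space M. e < dist (g n x) (f x)}) \<longlonglongrightarrow> 0)"

definition cl0 :: "'a measure \<Rightarrow> ('a \<Rightarrow> 'b::{banach,second_countable_topology}) set \<Rightarrow> ('a \<Rightarrow> 'b) set" where
  "cl0 M B = {f \<in> L0 M. \<exists>g. (\<forall>n. g n \<in> B) \<and> conv_in_prob M g f}"

definition chcd0 :: "'a measure \<Rightarrow> ('a \<Rightarrow> 'b::{banach,second_countable_topology}) set \<Rightarrow> ('a \<Rightarrow> 'b) set" where
  "chcd0 M B = (if B = {} then {} else cl0 M (dec M (conv_rv B)))"

definition chcd :: "'a measure \<Rightarrow> real \<Rightarrow> ('a \<Rightarrow> 'b::{banach,second_countable_topology}) set \<Rightarrow> ('a \<Rightarrow> 'b) set" where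
  "chcd M q B = chcd0 M B \<inter> Lq M q"

end

theory Submission
  imports Defs
begin

lemma dec_I:
  fixes C :: "'i \<Rightarrow> 'a set"
  assumes "finite I" "I \<noteq> {}" "\<And>i. i \<in> I \<Longrightarrow> C i \<in> sets M" "\<And>i. i \<in> I \<Longrightarrow> \<xi> i \<in> B"
    "disjoint_family_on C I" "(\<Union>i\<in>I. C i) = space M"
  shows "(\<lambda>x. \<Sum>i\<in>I. indicator (C i) x *\<^sub>R \<xi> i x) \<in> dec M B"
proof -
  obtain h where h: "bij_betw h {..<card I} I"
    using ex_bij_betw_nat_finite[OF assms(1)] by (auto simp: atLeast0LessThan)
  have c: "card I \<ge> 1" using assms(1,2) by (simp add: Suc_le_eq card_gt_0_iff)
  have inj: "inj_on h {..<card I}" and im: "h ` {..<card I} = I" using h by (auto simp: bij_betw_def)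
  have "disjoint_family_on (C \<circ> h) {..<card I}"
    using assms(5) inj im unfolding disjoint_family_on_def inj_on_def by (metis comp_apply imageI)
  moreover have "(\<Union>i<card I. (C \<circ> h) i) = (\<Union>i\<in>h ` {..<card I}. C i)" by simp
  then have "(\<Union>i<card I. (C \<circ> h) i) = space M" using assms(6) im by simp
  moreover have "(\<lambda>x. \<Sum>i\<in>I. indicator (C i) x *\<^sub>R \<xi> i x) = (\<lambda>x. \<Sum>i<card I. indicator ((C \<circ> h) i) x *\<^sub>R (\<xi> \<circ> h) i x)"
    unfolding comp_def by (intro ext, rule sum.reindex_bij_betw[OF h, symmetric])
  moreover have "\<forall>i<card I. (C \<circ> h) i \<in> sets M \<and> (\<xi> \<circ> h) i \<in> B" using assms(3,4) im by auto
  ultimately show ?thesis unfolding dec_def using c by blast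
qed

lemma conv_I:
  fixes c :: "'i \<Rightarrow> real"
  assumes "finite I" "I \<noteq> {}" "\<And>i. i \<in> I \<Longrightarrow> c i \<ge> 0" "\<And>i. i \<in> I \<Longrightarrow> g i \<in> B"
    "(\<Sum>i\<in>I. c i) = 1"
  shows "(\<lambda>x. \<Sum>i\<in>I. c i *\<^sub>R g i x) \<in> conv_rv B"
proof -
  obtain h where h: "bij_betw h {..<card I} I"
    using ex_bij_betw_nat_finite[OF assms(1)] by (auto simp: atLeast0LessThan)
  have cc: "card I \<ge> 1" using assms(1,2) by (simp add: Suc_le_eq card_gt_0_iff)
  have im: "h ` {..<card I} = I" using h by (auto simp: bij_betw_def)
  have "(\<lambda>x. \<Sum>i\<in>I. c i *\<^sub>R g i x) = (\<lambda>x. \<Sum>i<card I. (c \<circ> h) i *\<^sub>R (g \<circ> h) i x)"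
    unfolding comp_def by (intro ext, rule sum.reindex_bij_betw[OF h, symmetric])
  moreover have "(\<Sum>i<card I. (c \<circ> h) i) = 1" using sum.reindex_bij_betw[OF h, of c] assms(5) by simp
  moreover have "\<forall>i<card I. (c \<circ> h) i \<ge> 0 \<and> (g \<circ> h) i \<in> B" using assms(3,4) im by auto
  ultimately show ?thesis unfolding conv_rv_def using cc by blast
qed

lemma conv_L0: "B \<subseteq> L0 M \<Longrightarrow> conv_rv B \<subseteq> L0 M"
  unfolding conv_rv_def L0_def by (auto intro!: borel_measurable_sum borel_measurable_scaleR)

lemma dec_L0: assumes "B \<subseteq> L0 M" shows "dec M B \<subseteq> L0 M"
proof
  fix f assume "f \<in> dec M B"
  then obtain m :: nat and C \<xi> where *: "\<forall>i<m. C i \<in> sets M \<and> \<xi> i \<in> B"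
    "f = (\<lambda>x. \<Sum>i<m. indicator (C i) x *\<^sub>R \<xi> i x)" unfolding dec_def by blast
  have "\<And>i. i \<in> {..<m} \<Longrightarrow> (\<lambda>x. indicator (C i) x *\<^sub>R \<xi> i x) \<in> borel_measurable M"
    using * assms unfolding L0_def by (intro borel_measurable_scaleR borel_measurable_indicator) auto
  then show "f \<in> L0 M" unfolding *(2) L0_def by (rule borel_measurable_sum)
qed

lemma cl0_L0: "cl0 M B \<subseteq> L0 M" unfolding cl0_def by auto
lemma chcd0_L0: "chcd0 M B \<subseteq> L0 M" unfolding chcd0_def using cl0_L0 by auto

lemma cip_cong:
  assumes "\<And>n x. x \<in> space M \<Longrightarrow> g n x = g' n x" "\<And>x. x \<in> space M \<Longrightarrow> f x = f' x"
  shows "conv_in_prob M g f = conv_in_prob M g' f'"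
proof -
  have "\<And>e n. {x \<in> space M. e < dist (g n x) (f x)} = {x \<in> space M. e < dist (g' n x) (f' x)}"
    using assms by auto
  then show ?thesis unfolding conv_in_prob_def by simp
qed

lemma cip_const: "conv_in_prob M (\<lambda>n. f) f"
  unfolding conv_in_prob_def by simp

lemma cl0_sat:
  assumes "f \<in> L0 M" "t \<in> cl0 M K" "\<And>x. x \<in> space M \<Longrightarrow> f x = t x"
  shows "f \<in> cl0 M K"
  using assms cip_cong[of M _ _ f t] unfolding cl0_def by auto

lemma cl0_ext: "K \<subseteq> L0 M \<Longrightarrow> K \<subseteq> cl0 M K"
proof
  fix f assume "K \<subseteq> L0 M" "f \<in> K"
  then show "f \<in> cl0 M K" unfolding cl0_def using cip_const[of M f] by (auto intro!: exI[of _ "\<lambda>n. f"])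
qed

lemma cl0_mono: "K \<subseteq> K' \<Longrightarrow> cl0 M K \<subseteq> cl0 M K'"
  unfolding cl0_def by blast

lemma conv_mono: "B \<subseteq> B' \<Longrightarrow> conv_rv B \<subseteq> conv_rv B'"
  unfolding conv_rv_def by blast

lemma dec_mono: "B \<subseteq> B' \<Longrightarrow> dec M B \<subseteq> dec M B'"
  unfolding dec_def by blast

lemma chcd0_mono: "B \<subseteq> B' \<Longrightarrow> chcd0 M B \<subseteq> chcd0 M B'"
  unfolding chcd0_def using cl0_mono dec_mono conv_mono by (simp; blast)

lemma chcd0_ext:
  assumes "B \<subseteq> L0 M" shows "B \<subseteq> chcd0 M B"
proof
  fix f assume f: "f \<in> B"
  have fc: "f \<in> conv_rv B" unfolding conv_rv_def
    by (rule CollectI, rule exI[of _ 1], rule exI[of _ "\<lambda>_. 1"], rule exI[of _ "\<lambda>_. f"]) (use f in auto)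
  have "(\<lambda>x. \<Sum>i\<in>{()}. indicator ((\<lambda>_. space M) i) x *\<^sub>R (\<lambda>_. f) i x) \<in> dec M (conv_rv B)"
    by (rule dec_I) (use fc in \<open>auto simp: disjoint_family_on_def\<close>)
  then have d: "(\<lambda>x. indicator (space M) x *\<^sub>R f x) \<in> dec M (conv_rv B)"
    by (simp only: sum.insert[OF finite.emptyI empty_iff[THEN iffD1, THEN notI]] sum.empty add_0_right)
  have "dec M (conv_rv B) \<subseteq> L0 M" using dec_L0 conv_L0 assms by blast
  then have "(\<lambda>x. indicator (space M) x *\<^sub>R f x) \<in> cl0 M (dec M (conv_rv B))"
    using cl0_ext d by blast
  then have "f \<in> cl0 M (dec M (conv_rv B))"
    by (rule cl0_sat[rotated]) (use f assms in auto)
  then show "f \<in> chcd0 M B" unfolding chcd0_def using f by auto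
qed

lemma dist_set:
  fixes f g :: "'a \<Rightarrow> 'b::{second_countable_topology, metric_space}"
  assumes "f \<in> borel_measurable M" "g \<in> borel_measurable M"
  shows "{x \<in> space M. e < dist (f x) (g x)} \<in> sets M"
proof -
  have [measurable]: "(\<lambda>x. dist (f x) (g x)) \<in> borel_measurable M"
    using assms by (rule borel_measurable_dist)
  show ?thesis by measurable
qed

lemma cip_comb:
  fixes a b h :: "nat \<Rightarrow> 'a \<Rightarrow> 'b::{second_countable_topology, metric_space}"
  assumes P: "prob_space M"
    and ma: "\<And>n. a n \<in> borel_measurable M" and mf: "f \<in> borel_measurable M"
    and mb: "\<And>n. b n \<in> borel_measurable M" and mg: "g \<in> borel_measurable M"
    and mh: "\<And>n. h n \<in> borel_measurable M" and mhh: "hh \<in> borel_measurable M"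
    and ca: "conv_in_prob M a f" and cb: "conv_in_prob M b g"
    and al: "\<alpha> \<ge> 0" and be: "\<beta> \<ge> 0"
    and le: "\<And>n x. x \<in> space M \<Longrightarrow> dist (h n x) (hh x) \<le> \<alpha> * dist (a n x) (f x) + \<beta> * dist (b n x) (g x)"
  shows "conv_in_prob M h hh"
  unfolding conv_in_prob_def
proof (intro allI impI)
  interpret prob_space M by fact
  fix e :: real assume e: "e > 0"
  define e1 where "e1 = e / (2 * (\<alpha> + 1))"
  define e2 where "e2 = e / (2 * (\<beta> + 1))"
  have e1: "e1 > 0" and e2: "e2 > 0" using e al be by (auto simp: e1_def e2_def)
  define E where "E n = {x \<in> space M. e < dist (h n x) (hh x)}" for n
  define E1 where "E1 n = {x \<in> space M. e1 < dist (a n x) (f x)}" for n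
  define E2 where "E2 n = {x \<in> space M. e2 < dist (b n x) (g x)}" for n
  have sE: "E n \<in> sets M" for n unfolding E_def by (rule dist_set[OF mh mhh])
  have sE1: "E1 n \<in> sets M" for n unfolding E1_def by (rule dist_set[OF ma mf])
  have sE2: "E2 n \<in> sets M" for n unfolding E2_def by (rule dist_set[OF mb mg])
  have sub: "E n \<subseteq> E1 n \<union> E2 n" for n
  proof
    fix x assume x: "x \<in> E n"
    show "x \<in> E1 n \<union> E2 n"
    proof (rule ccontr)
      assume "x \<notin> E1 n \<union> E2 n"
      then have d1: "dist (a n x) (f x) \<le> e1" and d2: "dist (b n x) (g x) \<le> e2"
        using x unfolding E_def E1_def E2_def by auto
      have "\<alpha> * dist (a n x) (f x) \<le> \<alpha> * e1" using d1 al by (simp add: mult_left_mono)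
      also have "\<alpha> * e1 \<le> e / 2" using al e unfolding e1_def by (simp add: field_simps)
      finally have A1: "\<alpha> * dist (a n x) (f x) \<le> e / 2" .
      have "\<beta> * dist (b n x) (g x) \<le> \<beta> * e2" using d2 be by (simp add: mult_left_mono)
      also have "\<beta> * e2 \<le> e / 2" using be e unfolding e2_def by (simp add: field_simps)
      finally have A2: "\<beta> * dist (b n x) (g x) \<le> e / 2" .
      have "dist (h n x) (hh x) \<le> e" using le[of x n] A1 A2 x unfolding E_def by auto
      then show False using x unfolding E_def by auto
    qed
  qed
  have bd: "measure M (E n) \<le> measure M (E1 n) + measure M (E2 n)" for n
  proof -
    have "measure M (E n) \<le> measure M (E1 n \<union> E2 n)"
      using sub sE1 sE2 by (intro finite_measure_mono) auto
    also have "\<dots> \<le> measure M (E1 n) + measure M (E2 n)"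
      using sE1 sE2 by (rule measure_Un_le)
    finally show ?thesis .
  qed
  have t1: "(\<lambda>n. measure M (E1 n)) \<longlonglongrightarrow> 0" using ca e1 unfolding conv_in_prob_def E1_def by blast
  have t2: "(\<lambda>n. measure M (E2 n)) \<longlonglongrightarrow> 0" using cb e2 unfolding conv_in_prob_def E2_def by blast
  have "(\<lambda>n. measure M (E n)) \<longlonglongrightarrow> 0"
    by (rule tendsto_sandwich[of "\<lambda>_. 0" _ _ "\<lambda>n. measure M (E1 n) + measure M (E2 n)"])
       (use bd tendsto_add[OF t1 t2] in auto)
  then show "(\<lambda>n. measure M {x \<in> space M. e < dist (h n x) (hh x)}) \<longlonglongrightarrow> 0" unfolding E_def .
qed

lemma cip_diag:
  fixes k :: "nat \<Rightarrow> nat \<Rightarrow> 'a \<Rightarrow> 'b::{second_countable_topology, metric_space}"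
  assumes P: "prob_space M"
    and mk: "\<And>n m. k n m \<in> borel_measurable M" and mh: "\<And>n. h n \<in> borel_measurable M"
    and mf: "f \<in> borel_measurable M"
    and ck: "\<And>n. conv_in_prob M (k n) (h n)" and ch: "conv_in_prob M h f"
  shows "\<exists>r. conv_in_prob M (\<lambda>n. k n (r n)) f"
proof -
  interpret prob_space M by fact
  define F where "F n m = {x \<in> space M. 1 / real (Suc n) < dist (k n m x) (h n x)}" for n m
  have "\<exists>m. measure M (F n m) < 1 / real (Suc n)" for n
  proof -
    have "(\<lambda>m. measure M (F n m)) \<longlonglongrightarrow> 0" using ck[of n] unfolding conv_in_prob_def F_def by simp
    then have "\<forall>\<^sub>F m in sequentially. measure M (F n m) < 1 / real (Suc n)"
      by (rule order_tendstoD) simp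
    then show ?thesis by (metis eventually_sequentially order_refl)
  qed
  then obtain r where r: "\<And>n. measure M (F n (r n)) < 1 / real (Suc n)" by metis
  have "conv_in_prob M (\<lambda>n. k n (r n)) f" unfolding conv_in_prob_def
  proof (intro allI impI)
    fix e :: real assume e: "e > 0"
    define G where "G n = {x \<in> space M. e / 2 < dist (h n x) (f x)}" for n
    define E where "E n = {x \<in> space M. e < dist (k n (r n) x) (f x)}" for n
    have sF: "F n m \<in> sets M" for n m unfolding F_def by (rule dist_set[OF mk mh])
    have sG: "G n \<in> sets M" for n unfolding G_def by (rule dist_set[OF mh mf])
    have sE: "E n \<in> sets M" for n unfolding E_def by (rule dist_set[OF mk mf])
    obtain N where N: "1 / real (Suc N) < e / 2"
      using e by (metis half_gt_zero_iff nat_approx_posE)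
    have ev: "\<forall>\<^sub>F n in sequentially. measure M (E n) \<le> 1 / real (Suc n) + measure M (G n)"
      unfolding eventually_sequentially
    proof (intro exI[of _ N] allI impI)
      fix n assume n: "N \<le> n"
      have "1 / real (Suc n) \<le> 1 / real (Suc N)" using n by (simp add: frac_le)
      then have small: "1 / real (Suc n) < e / 2" using N by linarith
      have "E n \<subseteq> F n (r n) \<union> G n"
      proof
        fix x assume x: "x \<in> E n"
        have "dist (k n (r n) x) (f x) \<le> dist (k n (r n) x) (h n x) + dist (h n x) (f x)"
          by (rule dist_triangle)
        then show "x \<in> F n (r n) \<union> G n" using x small unfolding E_def F_def G_def by auto
      qed
      then have "measure M (E n) \<le> measure M (F n (r n) \<union> G n)"
        using sF sG by (intro finite_measure_mono) auto
      also have "\<dots> \<le> measure M (F n (r n)) + measure M (G n)" using sF sG by (rule measure_Un_le)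
      finally show "measure M (E n) \<le> 1 / real (Suc n) + measure M (G n)" using r[of n] by linarith
    qed
    have "(\<lambda>n. 1 / real (Suc n)) \<longlonglongrightarrow> 0" by (rule LIMSEQ_Suc[OF lim_const_over_n])
    moreover have "(\<lambda>n. measure M (G n)) \<longlonglongrightarrow> 0" using ch half_gt_zero[OF e] unfolding conv_in_prob_def G_def by blast
    ultimately have lim: "(\<lambda>n. 1 / real (Suc n) + measure M (G n)) \<longlonglongrightarrow> 0" using tendsto_add by fastforce
    have "(\<lambda>n. measure M (E n)) \<longlonglongrightarrow> 0"
      by (rule tendsto_sandwich[of "\<lambda>_. 0" _ _ "\<lambda>n. 1 / real (Suc n) + measure M (G n)"])
        (use ev lim in auto)
    then show "(\<lambda>n. measure M {x \<in> space M. e < dist (k n (r n) x) (f x)}) \<longlonglongrightarrow> 0" unfolding E_def .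
  qed
  then show ?thesis by blast
qed

lemma sum_ind_single:
  assumes "finite I" "i0 \<in> I" "x \<in> C i0" "disjoint_family_on C I"
  shows "(\<Sum>i\<in>I. indicator (C i) x *\<^sub>R f i) = (f i0 :: 'b::real_vector)"
proof -
  have "(\<Sum>i\<in>I. indicator (C i) x *\<^sub>R f i) = indicator (C i0) x *\<^sub>R f i0 + (\<Sum>i\<in>I - {i0}. indicator (C i) x *\<^sub>R f i)"
    using assms(1,2) by (rule sum.remove)
  moreover have "(\<Sum>i\<in>I - {i0}. indicator (C i) x *\<^sub>R f i) = 0"
  proof (rule sum.neutral, intro ballI)
    fix i assume "i \<in> I - {i0}"
    then have "x \<notin> C i" using assms(2,3,4) unfolding disjoint_family_on_def by blast
    then show "indicator (C i) x *\<^sub>R f i = 0" by simp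
  qed
  ultimately show ?thesis using assms(3) by simp
qed

lemma conv_comb:
  assumes "\<xi> \<in> conv_rv B" "\<eta> \<in> conv_rv B" "0 \<le> l" "l \<le> 1"
  shows "(\<lambda>x. l *\<^sub>R \<xi> x + (1 - l) *\<^sub>R \<eta> x) \<in> conv_rv B"
proof -
  obtain n1 :: nat and c1 g1 where 1: "n1 \<ge> 1" "\<forall>i<n1. c1 i \<ge> 0 \<and> g1 i \<in> B" "(\<Sum>i<n1. c1 i) = 1"
    "\<xi> = (\<lambda>x. \<Sum>i<n1. c1 i *\<^sub>R g1 i x)" using assms(1) unfolding conv_rv_def by blast
  obtain n2 :: nat and c2 g2 where 2: "n2 \<ge> 1" "\<forall>i<n2. c2 i \<ge> 0 \<and> g2 i \<in> B" "(\<Sum>i<n2. c2 i) = 1"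
    "\<eta> = (\<lambda>x. \<Sum>i<n2. c2 i *\<^sub>R g2 i x)" using assms(2) unfolding conv_rv_def by blast
  define c where "c = case_sum (\<lambda>i. l * c1 i) (\<lambda>j. (1 - l) * c2 j)"
  define g where "g = case_sum g1 g2"
  have "(\<lambda>x. \<Sum>i\<in>{..<n1} <+> {..<n2}. c i *\<^sub>R g i x) \<in> conv_rv B"
  proof (rule conv_I)
    show "finite ({..<n1} <+> {..<n2})" by simp
    show "{..<n1} <+> {..<n2} \<noteq> {}" using 1 by auto
    show "\<And>i. i \<in> {..<n1} <+> {..<n2} \<Longrightarrow> 0 \<le> c i" using 1 2 assms(3,4) unfolding c_def by auto
    show "\<And>i. i \<in> {..<n1} <+> {..<n2} \<Longrightarrow> g i \<in> B" using 1 2 unfolding g_def by auto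
    show "(\<Sum>i\<in>{..<n1} <+> {..<n2}. c i) = 1"
      using 1(3) 2(3) by (simp add: sum.Plus c_def comp_def sum_distrib_left[symmetric])
  qed
  moreover have "(\<lambda>x. \<Sum>i\<in>{..<n1} <+> {..<n2}. c i *\<^sub>R g i x) = (\<lambda>x. l *\<^sub>R \<xi> x + (1 - l) *\<^sub>R \<eta> x)"
    by (rule ext) (simp add: sum.Plus c_def g_def comp_def 1(4) 2(4) scaleR_sum_right)
  ultimately show ?thesis by simp
qed

lemma dec_cover:
  assumes "f \<in> dec M B"
  obtains m :: nat and C \<xi> where "m \<ge> 1" "\<forall>i<m. C i \<in> sets M \<and> \<xi> i \<in> B" "disjoint_family_on C {..<m}"
    "(\<Union>i<m. C i) = space M" "f = (\<lambda>x. \<Sum>i<m. indicator (C i) x *\<^sub>R \<xi> i x)"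
  using assms unfolding dec_def by blast

lemma K_conv:
  assumes "k1 \<in> dec M (conv_rv B)" "k2 \<in> dec M (conv_rv B)" "0 \<le> l" "l \<le> 1"
  shows "\<exists>k \<in> dec M (conv_rv B). \<forall>x\<in>space M. k x = l *\<^sub>R k1 x + (1 - l) *\<^sub>R k2 x"
proof -
  obtain m1 :: nat and C \<xi> where 1: "m1 \<ge> 1" "\<forall>i<m1. C i \<in> sets M \<and> \<xi> i \<in> conv_rv B" "disjoint_family_on C {..<m1}"
    "(\<Union>i<m1. C i) = space M" "k1 = (\<lambda>x. \<Sum>i<m1. indicator (C i) x *\<^sub>R \<xi> i x)"
    using dec_cover[OF assms(1)] by blast
  obtain m2 :: nat and D \<eta> where 2: "m2 \<ge> 1" "\<forall>i<m2. D i \<in> sets M \<and> \<eta> i \<in> conv_rv B" "disjoint_family_on D {..<m2}"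
    "(\<Union>i<m2. D i) = space M" "k2 = (\<lambda>x. \<Sum>i<m2. indicator (D i) x *\<^sub>R \<eta> i x)"
    using dec_cover[OF assms(2)] by blast
  define I where "I = {..<m1} \<times> {..<m2}"
  define E where "E = (\<lambda>(i,j). C i \<inter> D j)"
  define \<zeta> where "\<zeta> = (\<lambda>(i,j) x. l *\<^sub>R \<xi> i x + (1 - l) *\<^sub>R \<eta> j x)"
  have dE: "disjoint_family_on E I"
    unfolding disjoint_family_on_def
  proof (intro ballI impI)
    fix p q assume p: "p \<in> I" and q: "q \<in> I" and pq: "p \<noteq> q"
    obtain i j i' j' where pp: "p = (i,j)" "q = (i',j')" by (cases p, cases q) auto
    show "E p \<inter> E q = {}"
    proof (cases "i = i'")
      case True
      then have "j \<noteq> j'" using pq pp by auto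
      then have "D j \<inter> D j' = {}" using 2(3) p q pp unfolding disjoint_family_on_def I_def by auto
      then show ?thesis unfolding E_def pp by auto
    next
      case False
      then have "C i \<inter> C i' = {}" using 1(3) p q pp unfolding disjoint_family_on_def I_def by auto
      then show ?thesis unfolding E_def pp by auto
    qed
  qed
  have kk: "(\<lambda>x. \<Sum>p\<in>I. indicator (E p) x *\<^sub>R \<zeta> p x) \<in> dec M (conv_rv B)"
  proof (rule dec_I)
    show "finite I" "I \<noteq> {}" using 1(1) 2(1) unfolding I_def by (auto simp: lessThan_empty_iff)
    show "\<And>p. p \<in> I \<Longrightarrow> E p \<in> sets M" using 1(2) 2(2) unfolding I_def E_def by auto
    show "\<zeta> p \<in> conv_rv B" if p: "p \<in> I" for p
    proof -
      obtain i j where ij: "p = (i,j)" "i < m1" "j < m2" using p unfolding I_def by auto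
      then show ?thesis unfolding \<zeta>_def using 1(2) 2(2) assms(3,4) conv_comb[of "\<xi> i" B "\<eta> j" l] by simp
    qed
    show "disjoint_family_on E I" by fact
    show "(\<Union>p\<in>I. E p) = space M"
    proof
      show "(\<Union>p\<in>I. E p) \<subseteq> space M" using 1(4) unfolding I_def E_def by auto
      show "space M \<subseteq> (\<Union>p\<in>I. E p)"
      proof
        fix x assume x: "x \<in> space M"
        obtain i where "i < m1" "x \<in> C i" using x 1(4) by auto
        moreover obtain j where "j < m2" "x \<in> D j" using x 2(4) by auto
        ultimately show "x \<in> (\<Union>p\<in>I. E p)" unfolding I_def E_def by auto
      qed
    qed
  qed
  have "\<forall>x\<in>space M. (\<Sum>p\<in>I. indicator (E p) x *\<^sub>R \<zeta> p x) = l *\<^sub>R k1 x + (1 - l) *\<^sub>R k2 x"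
  proof
    fix x assume x: "x \<in> space M"
    obtain i where i: "i < m1" "x \<in> C i" using x 1(4) by auto
    obtain j where j: "j < m2" "x \<in> D j" using x 2(4) by auto
    have "(\<Sum>p\<in>I. indicator (E p) x *\<^sub>R \<zeta> p x) = \<zeta> (i,j) x"
      by (rule sum_ind_single) (use i j dE in \<open>auto simp: I_def E_def\<close>)
    moreover have "k1 x = \<xi> i x" unfolding 1(5) by (rule sum_ind_single) (use i 1(3) in auto)
    moreover have "k2 x = \<eta> j x" unfolding 2(5) by (rule sum_ind_single) (use j 2(3) in auto)
    ultimately show "(\<Sum>p\<in>I. indicator (E p) x *\<^sub>R \<zeta> p x) = l *\<^sub>R k1 x + (1 - l) *\<^sub>R k2 x"
      unfolding \<zeta>_def by simp
  qed
  then show ?thesis by (intro bexI[OF _ kk]) simp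
qed

lemma K_if:
  assumes "k1 \<in> dec M (conv_rv B)" "k2 \<in> dec M (conv_rv B)" "A \<in> sets M"
  shows "\<exists>k \<in> dec M (conv_rv B). \<forall>x\<in>space M. k x = (if x \<in> A then k1 x else k2 x)"
proof -
  obtain m1 :: nat and C \<xi> where 1: "m1 \<ge> 1" "\<forall>i<m1. C i \<in> sets M \<and> \<xi> i \<in> conv_rv B" "disjoint_family_on C {..<m1}"
    "(\<Union>i<m1. C i) = space M" "k1 = (\<lambda>x. \<Sum>i<m1. indicator (C i) x *\<^sub>R \<xi> i x)"
    using dec_cover[OF assms(1)] by blast
  obtain m2 :: nat and D \<eta> where 2: "m2 \<ge> 1" "\<forall>i<m2. D i \<in> sets M \<and> \<eta> i \<in> conv_rv B" "disjoint_family_on D {..<m2}"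
    "(\<Union>i<m2. D i) = space M" "k2 = (\<lambda>x. \<Sum>i<m2. indicator (D i) x *\<^sub>R \<eta> i x)"
    using dec_cover[OF assms(2)] by blast
  define I where "I = {..<m1} <+> {..<m2}"
  define E where "E = case_sum (\<lambda>i. A \<inter> C i) (\<lambda>j. (space M - A) \<inter> D j)"
  define \<zeta> where "\<zeta> = case_sum \<xi> \<eta>"
  have dE: "disjoint_family_on E I"
    unfolding disjoint_family_on_def
  proof (intro ballI impI)
    fix p q assume p: "p \<in> I" and q: "q \<in> I" and pq: "p \<noteq> q"
    show "E p \<inter> E q = {}"
    proof (cases p)
      case p1: (Inl i)
      show ?thesis
      proof (cases q)
        case q1: (Inl i')
        have "i \<noteq> i'" using pq p1 q1 by auto
        moreover have "i \<in> {..<m1}" "i' \<in> {..<m1}" using p q p1 q1 unfolding I_def by auto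
        ultimately have "C i \<inter> C i' = {}" using 1(3) unfolding disjoint_family_on_def by blast
        moreover have "E p = A \<inter> C i" "E q = A \<inter> C i'" unfolding E_def p1 q1 by simp_all
        ultimately show ?thesis by blast
      next
        case q1: (Inr j)
        have "E p = A \<inter> C i" "E q = (space M - A) \<inter> D j" unfolding E_def p1 q1 by simp_all
        then show ?thesis by blast
      qed
    next
      case p1: (Inr j)
      show ?thesis
      proof (cases q)
        case q1: (Inr j')
        have "j \<noteq> j'" using pq p1 q1 by auto
        moreover have "j \<in> {..<m2}" "j' \<in> {..<m2}" using p q p1 q1 unfolding I_def by auto
        ultimately have "D j \<inter> D j' = {}" using 2(3) unfolding disjoint_family_on_def by blast
        moreover have "E p = (space M - A) \<inter> D j" "E q = (space M - A) \<inter> D j'" unfolding E_def p1 q1 by simp_all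
        ultimately show ?thesis by blast
      next
        case q1: (Inl i)
        have "E q = A \<inter> C i" "E p = (space M - A) \<inter> D j" unfolding E_def p1 q1 by simp_all
        then show ?thesis by blast
      qed
    qed
  qed
  have kk: "(\<lambda>x. \<Sum>p\<in>I. indicator (E p) x *\<^sub>R \<zeta> p x) \<in> dec M (conv_rv B)"
  proof (rule dec_I)
    show "finite I" "I \<noteq> {}" using 1(1) 2(1) unfolding I_def by (auto simp: lessThan_empty_iff)
    show "\<And>p. p \<in> I \<Longrightarrow> E p \<in> sets M" using 1(2) 2(2) assms(3) unfolding I_def E_def by auto
    show "\<And>p. p \<in> I \<Longrightarrow> \<zeta> p \<in> conv_rv B" using 1(2) 2(2) unfolding I_def \<zeta>_def by auto
    show "disjoint_family_on E I" by fact
    show "(\<Union>p\<in>I. E p) = space M"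
    proof
      show "(\<Union>p\<in>I. E p) \<subseteq> space M" using 1(4) 2(4) unfolding I_def E_def by auto
      show "space M \<subseteq> (\<Union>p\<in>I. E p)"
      proof
        fix x assume x: "x \<in> space M"
        obtain i where "i < m1" "x \<in> C i" using x 1(4) by auto
        moreover obtain j where "j < m2" "x \<in> D j" using x 2(4) by auto
        ultimately show "x \<in> (\<Union>p\<in>I. E p)"
        proof (cases "x \<in> A")
          case True
          with \<open>i < m1\<close> \<open>x \<in> C i\<close> show ?thesis unfolding I_def E_def by (intro UN_I[of "Inl i"]) auto
        next
          case False
          with \<open>j < m2\<close> \<open>x \<in> D j\<close> x show ?thesis unfolding I_def E_def by (intro UN_I[of "Inr j"]) auto
        qed
      qed
    qed
  qed
  have "\<forall>x\<in>space M. (\<Sum>p\<in>I. indicator (E p) x *\<^sub>R \<zeta> p x) = (if x \<in> A then k1 x else k2 x)"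
  proof
    fix x assume x: "x \<in> space M"
    obtain i where i: "i < m1" "x \<in> C i" using x 1(4) by auto
    obtain j where j: "j < m2" "x \<in> D j" using x 2(4) by auto
    have "k1 x = \<xi> i x" unfolding 1(5) by (rule sum_ind_single) (use i 1(3) in auto)
    moreover have "k2 x = \<eta> j x" unfolding 2(5) by (rule sum_ind_single) (use j 2(3) in auto)
    moreover have "x \<in> A \<Longrightarrow> (\<Sum>p\<in>I. indicator (E p) x *\<^sub>R \<zeta> p x) = \<zeta> (Inl i) x"
      by (rule sum_ind_single) (use i j dE in \<open>auto simp: I_def E_def\<close>)
    moreover have "x \<notin> A \<Longrightarrow> (\<Sum>p\<in>I. indicator (E p) x *\<^sub>R \<zeta> p x) = \<zeta> (Inr j) x"
      by (rule sum_ind_single) (use i j dE x in \<open>auto simp: I_def E_def\<close>)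
    ultimately show "(\<Sum>p\<in>I. indicator (E p) x *\<^sub>R \<zeta> p x) = (if x \<in> A then k1 x else k2 x)"
      unfolding \<zeta>_def by simp
  qed
  then show ?thesis by (intro bexI[OF _ kk]) simp
qed

lemma K_L0: "B \<subseteq> L0 M \<Longrightarrow> dec M (conv_rv B) \<subseteq> L0 M"
  using dec_L0 conv_L0 by blast

lemma cl0_E:
  assumes "f \<in> cl0 M K"
  obtains a where "\<And>n. a n \<in> K" "conv_in_prob M a f" "f \<in> L0 M"
  using assms unfolding cl0_def by blast

lemma dist_conv_le:
  fixes a b f g :: "'b::real_normed_vector"
  assumes "0 \<le> l" "l \<le> 1"
  shows "dist (l *\<^sub>R a + (1 - l) *\<^sub>R b) (l *\<^sub>R f + (1 - l) *\<^sub>R g) \<le> l * dist a f + (1 - l) * dist b g"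
proof -
  have "l *\<^sub>R a + (1 - l) *\<^sub>R b - (l *\<^sub>R f + (1 - l) *\<^sub>R g) = l *\<^sub>R (a - f) + (1 - l) *\<^sub>R (b - g)"
    by (simp add: algebra_simps)
  then have "dist (l *\<^sub>R a + (1 - l) *\<^sub>R b) (l *\<^sub>R f + (1 - l) *\<^sub>R g) = norm (l *\<^sub>R (a - f) + (1 - l) *\<^sub>R (b - g))"
    by (simp add: dist_norm)
  also have "\<dots> \<le> norm (l *\<^sub>R (a - f)) + norm ((1 - l) *\<^sub>R (b - g))" by (rule norm_triangle_ineq)
  also have "\<dots> = l * dist a f + (1 - l) * dist b g" using assms by (simp add: dist_norm)
  finally show ?thesis .
qed

lemma T_conv:
  fixes B :: "('a \<Rightarrow> 'b::{banach,second_countable_topology}) set"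
  assumes P: "prob_space M" and BL: "B \<subseteq> L0 M"
    and f: "f \<in> cl0 M (dec M (conv_rv B))" and g: "g \<in> cl0 M (dec M (conv_rv B))"
    and l: "0 \<le> l" "l \<le> 1"
  shows "(\<lambda>x. l *\<^sub>R f x + (1 - l) *\<^sub>R g x) \<in> cl0 M (dec M (conv_rv B))"
proof -
  let ?K = "dec M (conv_rv B)"
  obtain a where a: "\<And>n. a n \<in> ?K" "conv_in_prob M a f" "f \<in> L0 M" using cl0_E[OF f] by blast
  obtain b where b: "\<And>n. b n \<in> ?K" "conv_in_prob M b g" "g \<in> L0 M" using cl0_E[OF g] by blast
  have "\<forall>n. \<exists>k \<in> ?K. \<forall>x\<in>space M. k x = l *\<^sub>R a n x + (1 - l) *\<^sub>R b n x"
    using K_conv[OF a(1) b(1) l] by blast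
  then obtain k where k: "\<And>n. k n \<in> ?K" "\<And>n x. x \<in> space M \<Longrightarrow> k n x = l *\<^sub>R a n x + (1 - l) *\<^sub>R b n x"
    by metis
  have KL: "?K \<subseteq> L0 M" using K_L0[OF BL] .
  have m: "(\<lambda>x. l *\<^sub>R f x + (1 - l) *\<^sub>R g x) \<in> L0 M"
    using a(3) b(3) unfolding L0_def by measurable
  have "conv_in_prob M k (\<lambda>x. l *\<^sub>R f x + (1 - l) *\<^sub>R g x)"
  proof (rule cip_comb[OF P _ _ _ _ _ _ a(2) b(2) l(1)])
    show "\<And>n. a n \<in> borel_measurable M" "\<And>n. b n \<in> borel_measurable M" "\<And>n. k n \<in> borel_measurable M"
      using a(1) b(1) k(1) KL unfolding L0_def by auto
    show "f \<in> borel_measurable M" "g \<in> borel_measurable M"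
      "(\<lambda>x. l *\<^sub>R f x + (1 - l) *\<^sub>R g x) \<in> borel_measurable M" using a(3) b(3) m unfolding L0_def by auto
    show "0 \<le> 1 - l" using l by simp
    show "dist (k n x) (l *\<^sub>R f x + (1 - l) *\<^sub>R g x) \<le> l * dist (a n x) (f x) + (1 - l) * dist (b n x) (g x)"
      if "x \<in> space M" for n x
      using k(2)[OF that, of n] dist_conv_le[OF l] by simp
  qed
  then show ?thesis using m k(1) unfolding cl0_def by blast
qed

lemma T_if:
  fixes B :: "('a \<Rightarrow> 'b::{banach,second_countable_topology}) set"
  assumes P: "prob_space M" and BL: "B \<subseteq> L0 M"
    and f: "f \<in> cl0 M (dec M (conv_rv B))" and g: "g \<in> cl0 M (dec M (conv_rv B))"
    and A: "A \<in> sets M"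
  shows "(\<lambda>x. if x \<in> A then f x else g x) \<in> cl0 M (dec M (conv_rv B))"
proof -
  let ?K = "dec M (conv_rv B)"
  obtain a where a: "\<And>n. a n \<in> ?K" "conv_in_prob M a f" "f \<in> L0 M" using cl0_E[OF f] by blast
  obtain b where b: "\<And>n. b n \<in> ?K" "conv_in_prob M b g" "g \<in> L0 M" using cl0_E[OF g] by blast
  have "\<forall>n. \<exists>k \<in> ?K. \<forall>x\<in>space M. k x = (if x \<in> A then a n x else b n x)"
    using K_if[OF a(1) b(1) A] by blast
  then obtain k where k: "\<And>n. k n \<in> ?K" "\<And>n x. x \<in> space M \<Longrightarrow> k n x = (if x \<in> A then a n x else b n x)"
    by metis
  have KL: "?K \<subseteq> L0 M" using K_L0[OF BL] .
  have m: "(\<lambda>x. if x \<in> A then f x else g x) \<in> L0 M"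
    using a(3) b(3) A unfolding L0_def by (intro measurable_If_set) auto
  have "conv_in_prob M k (\<lambda>x. if x \<in> A then f x else g x)"
  proof (rule cip_comb[OF P _ _ _ _ _ _ a(2) b(2), where \<alpha>=1 and \<beta>=1])
    show "\<And>n. a n \<in> borel_measurable M" "\<And>n. b n \<in> borel_measurable M" "\<And>n. k n \<in> borel_measurable M"
      using a(1) b(1) k(1) KL unfolding L0_def by auto
    show "f \<in> borel_measurable M" "g \<in> borel_measurable M"
      "(\<lambda>x. if x \<in> A then f x else g x) \<in> borel_measurable M" using a(3) b(3) m unfolding L0_def by auto
    show "dist (k n x) (if x \<in> A then f x else g x) \<le> 1 * dist (a n x) (f x) + 1 * dist (b n x) (g x)"
      if "x \<in> space M" for n x
      using k(2)[OF that, of n] by simp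
  qed simp_all
  then show ?thesis using m k(1) unfolding cl0_def by blast
qed

lemma T_closed:
  fixes K :: "('a \<Rightarrow> 'b::{banach,second_countable_topology}) set"
  assumes P: "prob_space M" and KL: "K \<subseteq> L0 M"
  shows "cl0 M (cl0 M K) \<subseteq> cl0 M K"
proof
  fix f assume "f \<in> cl0 M (cl0 M K)"
  then obtain h where h: "\<And>n. h n \<in> cl0 M K" "conv_in_prob M h f" "f \<in> L0 M" by (rule cl0_E) blast
  have "\<forall>n. \<exists>a. (\<forall>m. a m \<in> K) \<and> conv_in_prob M a (h n)"
    using h(1) unfolding cl0_def by blast
  then obtain k where k: "\<And>n m. k n m \<in> K" "\<And>n. conv_in_prob M (k n) (h n)" by metis
  obtain r where r: "conv_in_prob M (\<lambda>n. k n (r n)) f"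
  proof -
    have "\<exists>r. conv_in_prob M (\<lambda>n. k n (r n)) f"
    proof (rule cip_diag[OF P _ _ _ k(2) h(2)])
      show "\<And>n m. k n m \<in> borel_measurable M" using k(1) KL unfolding L0_def by auto
      show "\<And>n. h n \<in> borel_measurable M" using h(1) cl0_L0 unfolding L0_def by blast
      show "f \<in> borel_measurable M" using h(3) unfolding L0_def .
    qed
    then show ?thesis using that by blast
  qed
  show "f \<in> cl0 M K" unfolding cl0_def using h(3) k(1) r by (auto intro!: exI[of _ "\<lambda>n. k n (r n)"])
qed

lemma T_convn:
  fixes B :: "('a \<Rightarrow> 'b::{banach,second_countable_topology}) set"
  assumes P: "prob_space M" and BL: "B \<subseteq> L0 M"
  shows "(\<forall>i<Suc n. c i \<ge> 0 \<and> g i \<in> cl0 M (dec M (conv_rv B))) \<Longrightarrow> (\<Sum>i<Suc n. c i) = 1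
    \<Longrightarrow> (\<lambda>x. \<Sum>i<Suc n. c i *\<^sub>R g i x) \<in> cl0 M (dec M (conv_rv B))"
proof (induction n arbitrary: c)
  case 0
  then show ?case by simp
next
  case (Suc n)
  let ?T = "cl0 M (dec M (conv_rv B))"
  define t where "t = c (Suc n)"
  have s: "(\<Sum>i<Suc n. c i) + t = 1" using Suc.prems(2) unfolding t_def by simp
  have nn: "(\<Sum>i<Suc n. c i) \<ge> 0" using Suc.prems(1) by (intro sum_nonneg) auto
  show ?case
  proof (cases "t = 1")
    case True
    then have "(\<Sum>i<Suc n. c i) = 0" using s by simp
    then have z: "\<forall>i\<in>{..<Suc n}. c i = 0" using Suc.prems(1) by (subst sum_nonneg_eq_0_iff[symmetric]) auto
    have "(\<lambda>x. \<Sum>i<Suc (Suc n). c i *\<^sub>R g i x) = g (Suc n)"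
      using z True unfolding t_def by (intro ext) simp
    then show ?thesis using Suc.prems(1) by simp
  next
    case False
    define l where "l = 1 - t"
    have lpos: "l > 0" using s nn False unfolding l_def by linarith
    define c' where "c' i = c i / l" for i
    have "(\<Sum>i<Suc n. c' i) = (\<Sum>i<Suc n. c i) / l" unfolding c'_def by (rule sum_divide_distrib[symmetric])
    also have "\<dots> = 1" using s lpos unfolding l_def by simp
    finally have c'1: "(\<Sum>i<Suc n. c' i) = 1" .
    have "(\<lambda>x. \<Sum>i<Suc n. c' i *\<^sub>R g i x) \<in> ?T"
      using Suc.IH[of c'] c'1 Suc.prems(1) lpos unfolding c'_def by simp
    moreover have "g (Suc n) \<in> ?T" using Suc.prems(1) by simp
    moreover have "0 \<le> l" "l \<le> 1" using lpos Suc.prems(1) unfolding l_def t_def by auto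
    ultimately have "(\<lambda>x. l *\<^sub>R (\<Sum>i<Suc n. c' i *\<^sub>R g i x) + (1 - l) *\<^sub>R g (Suc n) x) \<in> ?T"
      by (rule T_conv[OF P BL])
    moreover have "(\<lambda>x. l *\<^sub>R (\<Sum>i<Suc n. c' i *\<^sub>R g i x) + (1 - l) *\<^sub>R g (Suc n) x)
        = (\<lambda>x. \<Sum>i<Suc (Suc n). c i *\<^sub>R g i x)"
    proof (rule ext)
      fix x
      have "l *\<^sub>R (\<Sum>i<Suc n. c' i *\<^sub>R g i x) = (\<Sum>i<Suc n. l *\<^sub>R (c' i *\<^sub>R g i x))"
        by (rule scaleR_sum_right)
      also have "\<dots> = (\<Sum>i<Suc n. c i *\<^sub>R g i x)"
        using lpos unfolding c'_def by (intro sum.cong refl) simp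
      finally show "l *\<^sub>R (\<Sum>i<Suc n. c' i *\<^sub>R g i x) + (1 - l) *\<^sub>R g (Suc n) x
        = (\<Sum>i<Suc (Suc n). c i *\<^sub>R g i x)"
        unfolding l_def t_def by (simp only: sum.lessThan_Suc[of _ "Suc n"]) simp
    qed
    ultimately show ?thesis by simp
  qed
qed

lemma T_conv_sub:
  fixes B :: "('a \<Rightarrow> 'b::{banach,second_countable_topology}) set"
  assumes P: "prob_space M" and BL: "B \<subseteq> L0 M"
  shows "conv_rv (cl0 M (dec M (conv_rv B))) \<subseteq> cl0 M (dec M (conv_rv B))"
proof
  fix f assume "f \<in> conv_rv (cl0 M (dec M (conv_rv B)))"
  then obtain n :: nat and c g where n: "n \<ge> 1" "\<forall>i<n. c i \<ge> 0 \<and> g i \<in> cl0 M (dec M (conv_rv B))"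
    "(\<Sum>i<n. c i) = 1" "f = (\<lambda>x. \<Sum>i<n. c i *\<^sub>R g i x)" unfolding conv_rv_def by blast
  obtain n' where "n = Suc n'" using n(1) by (cases n) auto
  then show "f \<in> cl0 M (dec M (conv_rv B))" using T_convn[OF P BL, of n' c g] n by simp
qed

lemma T_dec_aux:
  fixes m :: nat and B :: "('a \<Rightarrow> 'b::{banach,second_countable_topology}) set"
  assumes P: "prob_space M" and BL: "B \<subseteq> L0 M"
  shows "disjoint_family_on C {..<m} \<Longrightarrow> (\<forall>i<m. C i \<in> sets M \<and> \<xi> i \<in> cl0 M (dec M (conv_rv B)))
    \<Longrightarrow> d \<in> cl0 M (dec M (conv_rv B))
    \<Longrightarrow> (\<lambda>x. if x \<in> (\<Union>i<m. C i) then \<Sum>i<m. indicator (C i) x *\<^sub>R \<xi> i x else d x) \<in> cl0 M (dec M (conv_rv B))"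
proof (induction m)
  case 0
  then show ?case by simp
next
  case (Suc m)
  let ?T = "cl0 M (dec M (conv_rv B))"
  let ?G = "(\<lambda>x. if x \<in> (\<Union>i<m. C i) then \<Sum>i<m. indicator (C i) x *\<^sub>R \<xi> i x else d x)"
  have "disjoint_family_on C {..<m}" using Suc.prems(1) by (rule disjoint_family_on_mono[rotated]) auto
  then have G: "?G \<in> ?T" using Suc.IH Suc.prems(2,3) by simp
  have H: "(\<lambda>x. if x \<in> C m then \<xi> m x else ?G x) \<in> ?T"
    by (rule T_if[OF P BL _ G]) (use Suc.prems(2) in auto)
  have "(\<lambda>x. if x \<in> (\<Union>i<Suc m. C i) then \<Sum>i<Suc m. indicator (C i) x *\<^sub>R \<xi> i x else d x)
      = (\<lambda>x. if x \<in> C m then \<xi> m x else ?G x)"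
  proof (rule ext)
    fix x
    show "(if x \<in> (\<Union>i<Suc m. C i) then \<Sum>i<Suc m. indicator (C i) x *\<^sub>R \<xi> i x else d x)
      = (if x \<in> C m then \<xi> m x else ?G x)"
    proof (cases "x \<in> C m")
      case True
      have "(\<Sum>i<Suc m. indicator (C i) x *\<^sub>R \<xi> i x) = \<xi> m x"
        by (rule sum_ind_single) (use True Suc.prems(1) in auto)
      then show ?thesis using True by auto
    next
      case False
      have "(\<Sum>i<Suc m. indicator (C i) x *\<^sub>R \<xi> i x) = (\<Sum>i<m. indicator (C i) x *\<^sub>R \<xi> i x)"
        using False by simp
      moreover have "(x \<in> (\<Union>i<Suc m. C i)) = (x \<in> (\<Union>i<m. C i))"
        using False by (auto simp: less_Suc_eq)
      ultimately show ?thesis using False by simp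
    qed
  qed
  then show ?case using H by simp
qed

lemma T_dec_sub:
  fixes B :: "('a \<Rightarrow> 'b::{banach,second_countable_topology}) set"
  assumes P: "prob_space M" and BL: "B \<subseteq> L0 M"
  shows "dec M (cl0 M (dec M (conv_rv B))) \<subseteq> cl0 M (dec M (conv_rv B))"
proof
  let ?T = "cl0 M (dec M (conv_rv B))"
  fix f assume f: "f \<in> dec M ?T"
  then obtain m :: nat and C \<xi> where m: "m \<ge> 1" "\<forall>i<m. C i \<in> sets M \<and> \<xi> i \<in> ?T" "disjoint_family_on C {..<m}"
    "(\<Union>i<m. C i) = space M" "f = (\<lambda>x. \<Sum>i<m. indicator (C i) x *\<^sub>R \<xi> i x)" by (rule dec_cover)
  have d: "\<xi> 0 \<in> ?T" using m(1,2) by auto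
  have G: "(\<lambda>x. if x \<in> (\<Union>i<m. C i) then \<Sum>i<m. indicator (C i) x *\<^sub>R \<xi> i x else \<xi> 0 x) \<in> ?T"
    using T_dec_aux[OF P BL m(3) m(2) d] .
  have fL: "f \<in> L0 M" using f dec_L0[OF cl0_L0] by blast
  show "f \<in> ?T"
    by (rule cl0_sat[OF fL G]) (use m(4,5) in auto)
qed

lemma chcd0_idem:
  fixes B :: "('a \<Rightarrow> 'b::{banach,second_countable_topology}) set"
  assumes P: "prob_space M" and BL: "B \<subseteq> L0 M" and B: "B \<noteq> {}"
  shows "chcd0 M (chcd0 M B) = chcd0 M B"
proof
  let ?T = "cl0 M (dec M (conv_rv B))"
  have T: "chcd0 M B = ?T" using B unfolding chcd0_def by simp
  have "?T \<noteq> {}" using chcd0_ext[OF BL] B T by auto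
  then have "chcd0 M (chcd0 M B) = cl0 M (dec M (conv_rv ?T))" unfolding T by (simp add: chcd0_def)
  also have "\<dots> \<subseteq> cl0 M ?T"
    by (intro cl0_mono order.trans[OF dec_mono[OF T_conv_sub[OF P BL]] T_dec_sub[OF P BL]])
  also have "\<dots> \<subseteq> ?T" by (rule T_closed[OF P K_L0[OF BL]])
  finally show "chcd0 M (chcd0 M B) \<subseteq> chcd0 M B" unfolding T .
  show "chcd0 M B \<subseteq> chcd0 M (chcd0 M B)" by (rule chcd0_ext[OF chcd0_L0])
qed

lemma chcd0_if:
  fixes B :: "('a \<Rightarrow> 'b::{banach,second_countable_topology}) set"
  assumes P: "prob_space M" and BL: "B \<subseteq> L0 M" and B: "B \<noteq> {}"
    and "f \<in> chcd0 M B" "g \<in> chcd0 M B" "A \<in> sets M"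
  shows "(\<lambda>x. if x \<in> A then f x else g x) \<in> chcd0 M B"
  using T_if[OF P BL, of f g A] assms unfolding chcd0_def by simp

lemma chcd0_closed:
  fixes B :: "('a \<Rightarrow> 'b::{banach,second_countable_topology}) set"
  assumes P: "prob_space M" and BL: "B \<subseteq> L0 M" and B: "B \<noteq> {}"
  shows "cl0 M (chcd0 M B) \<subseteq> chcd0 M B"
  using T_closed[OF P K_L0[OF BL]] B unfolding chcd0_def by simp

lemma Lq_mono:
  fixes f :: "'a \<Rightarrow> 'b::{banach,second_countable_topology}"
  assumes P: "prob_space M" and s: "1 \<le> s" "s \<le> p" and f: "f \<in> Lq M p"
  shows "f \<in> Lq M s"
proof -
  interpret prob_space M by fact
  have fm: "f \<in> borel_measurable M" and fi: "integrable M (\<lambda>x. norm (f x) powr p)" using f unfolding Lq_def by auto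
  have "integrable M (\<lambda>x. 1 + norm (f x) powr p)" using fi by simp
  moreover have "(\<lambda>x. norm (f x) powr s) \<in> borel_measurable M" using fm by measurable
  moreover have "AE x in M. norm (norm (f x) powr s) \<le> norm (1 + norm (f x) powr p)"
  proof (rule AE_I2)
    fix x
    have "norm (f x) powr s \<le> 1 + norm (f x) powr p"
    proof (cases "norm (f x) \<le> 1")
      case True
      then have "norm (f x) powr s \<le> 1" using s by (intro powr_le1) auto
      then show ?thesis by (smt (verit) powr_ge_zero)
    next
      case False
      then have "norm (f x) powr s \<le> norm (f x) powr p" using s by (intro powr_mono) auto
      then show ?thesis by simp
    qed
    then show "norm (norm (f x) powr s) \<le> norm (1 + norm (f x) powr p)" by simp
  qed
  ultimately have "integrable M (\<lambda>x. norm (f x) powr s)" by (rule Bochner_Integration.integrable_bound)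
  then show ?thesis using fm unfolding Lq_def by simp
qed

lemma Lq_L0: "Lq M q \<subseteq> L0 M" unfolding Lq_def L0_def by auto

lemma trunc:
  fixes B :: "('a \<Rightarrow> 'b::{banach,second_countable_topology}) set"
  assumes P: "prob_space M" and BL: "B \<subseteq> L0 M" and B: "B \<noteq> {}" and p: "1 \<le> p"
    and g: "g \<in> chcd0 M B \<inter> Lq M p" and f: "f \<in> chcd0 M B"
  shows "f \<in> chcd0 M (chcd0 M B \<inter> Lq M p)"
proof -
  interpret prob_space M by fact
  let ?D = "chcd0 M B"
  let ?S = "?D \<inter> Lq M p"
  have fm: "f \<in> borel_measurable M" using f chcd0_L0 unfolding L0_def by blast
  have gm: "g \<in> borel_measurable M" and gi: "integrable M (\<lambda>x. norm (g x) powr p)"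
    using g unfolding Lq_def by auto
  define A where "A n = {x \<in> space M. norm (f x) \<le> real n}" for n :: nat
  have As: "A n \<in> sets M" for n unfolding A_def using fm by measurable
  define h where "h n = (\<lambda>x. if x \<in> A n then f x else g x)" for n
  have hm: "h n \<in> borel_measurable M" for n
    unfolding h_def using fm gm As by (intro measurable_If_set) auto
  have hD: "h n \<in> ?D" for n unfolding h_def using chcd0_if[OF P BL B f _ As] g by auto
  have hL: "h n \<in> Lq M p" for n
  proof -
    have "integrable M (\<lambda>x. real n powr p + norm (g x) powr p)" using gi by simp
    moreover have "(\<lambda>x. norm (h n x) powr p) \<in> borel_measurable M" using hm by measurable
    moreover have "AE x in M. norm (norm (h n x) powr p) \<le> norm (real n powr p + norm (g x) powr p)"
    proof (rule AE_I2)
      fix x assume x: "x \<in> space M"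
      have "norm (h n x) powr p \<le> real n powr p + norm (g x) powr p"
      proof (cases "x \<in> A n")
        case True
        then have "norm (f x) powr p \<le> real n powr p" using p unfolding A_def by (intro powr_mono2) auto
        then show ?thesis using True unfolding h_def by (smt (verit) powr_ge_zero)
      next
        case False
        then show ?thesis unfolding h_def by simp
      qed
      then show "norm (norm (h n x) powr p) \<le> norm (real n powr p + norm (g x) powr p)" by simp
    qed
    ultimately have "integrable M (\<lambda>x. norm (h n x) powr p)" by (rule Bochner_Integration.integrable_bound)
    then show ?thesis using hm unfolding Lq_def by simp
  qed
  have SL: "?S \<subseteq> L0 M" using chcd0_L0 by blast
  have Sne: "?S \<noteq> {}" using g by blast
  have hS: "h n \<in> chcd0 M ?S" for n using chcd0_ext[OF SL] hD hL by blast
  have conv: "conv_in_prob M h f" unfolding conv_in_prob_def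
  proof (intro allI impI)
    fix e :: real assume e: "e > 0"
    define F where "F n = {x \<in> space M. real n < norm (f x)}" for n :: nat
    have Fs: "F n \<in> sets M" for n unfolding F_def using fm by measurable
    have dec: "decseq F" unfolding decseq_def F_def by auto
    have "(\<Inter>n. F n) = {}"
    proof (rule ccontr)
      assume "(\<Inter>n. F n) \<noteq> {}"
      then obtain x where "\<forall>n. x \<in> F n" by blast
      moreover obtain n :: nat where "norm (f x) \<le> real n" using real_arch_simple by blast
      ultimately have "real n < norm (f x)" "norm (f x) \<le> real n" unfolding F_def by auto
      then show False by linarith
    qed
    then have lim: "(\<lambda>n. measure M (F n)) \<longlonglongrightarrow> 0"
      using finite_Lim_measure_decseq[of F] Fs dec by auto
    have le: "measure M {x \<in> space M. e < dist (h n x) (f x)} \<le> measure M (F n)" for n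
    proof (rule finite_measure_mono[OF _ Fs])
      show "{x \<in> space M. e < dist (h n x) (f x)} \<subseteq> F n"
        using e unfolding F_def h_def A_def by auto
    qed
    show "(\<lambda>n. measure M {x \<in> space M. e < dist (h n x) (f x)}) \<longlonglongrightarrow> 0"
      by (rule tendsto_sandwich[of "\<lambda>_. 0" _ _ "\<lambda>n. measure M (F n)"]) (use le lim in auto)
  qed
  have "f \<in> cl0 M (chcd0 M ?S)" unfolding cl0_def using f chcd0_L0 hS conv by blast
  then show ?thesis using chcd0_closed[OF P SL Sne] by blast
qed

theorem mainTheorem18:
  fixes M :: "'a measure" and A :: "('a \<Rightarrow> 'b::{banach,second_countable_topology}) set"
    and p s :: real
  assumes "prob_space M" and "complete_measure M"
    and "A \<noteq> {}" and "A \<subseteq> L0 M"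
    and "1 \<le> s" and "s \<le> p"
  shows "(chcd M p A \<noteq> {} \<longrightarrow> chcd0 M (chcd M p A) = chcd0 M A)
    \<and> chcd M p (chcd0 M A) = chcd M p A
    \<and> chcd M p (chcd M p A) = chcd M p A
    \<and> chcd M p (chcd M s A) = chcd M p A
    \<and> (chcd M p A \<noteq> {} \<longrightarrow> chcd M s (chcd M p A) = chcd M s A)"
proof -
  note P = assms(1)
  have p1: "1 \<le> p" using assms(5,6) by linarith
  let ?D = "chcd0 M A"
  have AD: "A \<subseteq> ?D" using chcd0_ext[OF assms(4)] .
  have Dne: "?D \<noteq> {}" using AD assms(3) by blast
  have DL: "?D \<subseteq> L0 M" by (rule chcd0_L0)
  have idem: "chcd0 M ?D = ?D" by (rule chcd0_idem[OF P assms(4,3)])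
  have sub: "chcd0 M S \<subseteq> ?D" if "S \<subseteq> ?D" for S
  proof (cases "S = {}")
    case True then show ?thesis unfolding chcd0_def by simp
  next
    case False then show ?thesis using chcd0_mono[OF that, of M] idem by simp
  qed
  have ext: "S \<subseteq> chcd0 M S" if "S \<subseteq> ?D" for S using chcd0_ext[of S M] that DL by blast
  have Pdef: "chcd M p A = ?D \<inter> Lq M p" unfolding chcd_def ..
  have c2: "chcd M p ?D = chcd M p A" unfolding chcd_def idem ..
  have c3: "chcd M p (chcd M p A) = chcd M p A"
  proof -
    have "chcd0 M (?D \<inter> Lq M p) \<subseteq> ?D" by (rule sub) blast
    moreover have "?D \<inter> Lq M p \<subseteq> chcd0 M (?D \<inter> Lq M p)" by (rule ext) blast
    ultimately show ?thesis unfolding chcd_def by blast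
  qed
  have c4: "chcd M p (chcd M s A) = chcd M p A"
  proof -
    have "chcd0 M (?D \<inter> Lq M s) \<subseteq> ?D" by (rule sub) blast
    moreover have "?D \<inter> Lq M s \<subseteq> chcd0 M (?D \<inter> Lq M s)" by (rule ext) blast
    moreover have "Lq M p \<subseteq> Lq M s" using Lq_mono[OF P assms(5,6)] by blast
    ultimately show ?thesis unfolding chcd_def by blast
  qed
  have c1: "chcd0 M (chcd M p A) = ?D" if ne: "chcd M p A \<noteq> {}"
  proof
    show "chcd0 M (chcd M p A) \<subseteq> ?D" unfolding Pdef by (rule sub) blast
    obtain g where g: "g \<in> ?D \<inter> Lq M p" using ne unfolding Pdef by blast
    show "?D \<subseteq> chcd0 M (chcd M p A)" unfolding Pdef using trunc[OF P assms(4,3) p1 g] by blast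
  qed
  have c5: "chcd M s (chcd M p A) = chcd M s A" if ne: "chcd M p A \<noteq> {}"
    unfolding chcd_def[of M s] c1[OF ne] ..
  show ?thesis using c1 c2 c3 c4 c5 by blast
qed

end
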